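(* Let $a\in\mathbb{C}$ be generic and $f(\zeta)=\sum_{w^*\in\mathcal{V}(\Delta^* )}\zeta^{w^*}+a\,\zeta^{0^*}\in\mathbb{C}[\zeta_v:v\in\mathcal{V}(\Delta)]$, and let $J(f)$ be the ideal generated by the partial derivatives $\partial f/\partial\zeta_v$, $v\in\mathcal{V}(\Delta)$. Let $x^*\in L^*$ lie in the relative interior of a facet of $\Delta^*$. Then $$\zeta^{x^*}\equiv\sum\{\mathbb{C}\,\zeta^{v^*}: v^*\in L^*\cap(\partial\Delta^*\setminus\textstyle\bigcup_{F^*\text{ facet of }\Delta^*}\mathrm{Int}(F^* ))\}\pmod{J(f)},$$ i.e. $\zeta^{x^*}$ is congruent modulo $J(f)$ to a $\mathbb{C}$-linear combination of monomials $\zeta^{v^*}$ with $v^*$ lattice points of $\partial\Delta^*$ lying in faces of dimension less than $n-1$.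
   Context: $L$ is a lattice of rank $n$, $L^*$ its dual; $(\Delta,L)$ is a reflexive polytope (an $n$-dimensional lattice polytope with the origin in its interior such that $\Delta^*=\{y\in L^*_{\mathbb{R}}:\langle y,x\rangle\ge-1\ \forall x\in\Delta\}$ is also a lattice polytope). $\mathcal{V}(\Delta)$, $\mathcal{V}(\Delta^* )$ are the vertex sets, $0^*$ is the origin of $L^*$, and $\mathrm{Int}$ denotes relative interior. The variables $\zeta=(\zeta_v)_{v\in\mathcal{V}(\Delta)}$ are homogeneous coordinates of the toric variety defined by the fan of cones over the faces of $\Delta$; for $v^*\in\Delta^*\cap L^*$ the monomial is $\zeta^{v^*}=\prod_{v\in\mathcal{V}(\Delta)}\zeta_v^{\langle v^*,v\rangle+1}$ (exponents are non-negative integers). *)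

theory Defs
  imports "HOL-Analysis.Analysis" "HOL-Library.Poly_Mapping"
begin

text \<open>The lattice L is Z^n inside R^n (type real^'n); the dual lattice L* is identified
with Z^n via the standard inner product.\<close>

definition lattice_pt :: "real^'n \<Rightarrow> bool" where
  "lattice_pt x \<longleftrightarrow> (\<forall>i. x $ i \<in> \<int>)"

definition lattice_polytope :: "(real^'n) set \<Rightarrow> bool" where
  "lattice_polytope P \<longleftrightarrow> (\<exists>S. finite S \<and> (\<forall>x\<in>S. lattice_pt x) \<and> P = convex hull S)"

definition dual_polytope :: "(real^'n) set \<Rightarrow> (real^'n) set" where
  "dual_polytope D = {y. \<forall>x\<in>D. y \<bullet> x \<ge> -1}"

definition reflexive_polytope :: "(real^'n) set \<Rightarrow> bool" where
  "reflexive_polytope D \<longleftrightarrow> lattice_polytope D \<and> 0 \<in> interior D \<and> lattice_polytope (dual_polytope D)"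

definition vertices :: "(real^'n) set \<Rightarrow> (real^'n) set" where
  "vertices P = {v. v extreme_point_of P}"

text \<open>Polynomials in the variables zeta_v (v a vertex of D) with complex coefficients:
finitely supported maps from exponent vectors to coefficients.\<close>

type_synonym 'n zpoly = "((real^'n) \<Rightarrow>\<^sub>0 nat) \<Rightarrow>\<^sub>0 complex"

text \<open>Exponent vector of zeta^y: zeta_v has exponent <y,v> + 1 for each vertex v of D.\<close>
definition expo :: "(real^'n) set \<Rightarrow> real^'n \<Rightarrow> (real^'n) \<Rightarrow>\<^sub>0 nat" where
  "expo D y = Abs_poly_mapping (\<lambda>v. if v \<in> vertices D then nat (\<lfloor>y \<bullet> v\<rfloor> + 1) else 0)"

definition zmono :: "(real^'n) set \<Rightarrow> real^'n \<Rightarrow> 'n zpoly" where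
  "zmono D y = Poly_Mapping.single (expo D y) 1"

definition const_poly :: "complex \<Rightarrow> 'n zpoly" where
  "const_poly c = Poly_Mapping.single 0 c"

definition pderiv_var :: "real^'n \<Rightarrow> 'n zpoly \<Rightarrow> 'n zpoly" where
  "pderiv_var v p = Abs_poly_mapping
     (\<lambda>\<beta> :: (real^'n) \<Rightarrow>\<^sub>0 nat. of_nat (Poly_Mapping.lookup \<beta> v + 1) * Poly_Mapping.lookup p (\<beta> + Poly_Mapping.single v 1))"

definition fpoly :: "(real^'n) set \<Rightarrow> complex \<Rightarrow> 'n zpoly" where
  "fpoly D a = (\<Sum>w\<in>vertices (dual_polytope D). zmono D w) + const_poly a * zmono D 0"

definition in_gen_ideal :: "'i set \<Rightarrow> ('i \<Rightarrow> 'n zpoly) \<Rightarrow> 'n zpoly \<Rightarrow> bool" where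
  "in_gen_ideal I g p \<longleftrightarrow> (\<exists>h. p = (\<Sum>i\<in>I. h i * g i))"

definition jacobian_ideal_mem :: "(real^'n) set \<Rightarrow> complex \<Rightarrow> 'n zpoly \<Rightarrow> bool" where
  "jacobian_ideal_mem D a p \<longleftrightarrow> in_gen_ideal (vertices D) (\<lambda>v. pderiv_var v (fpoly D a)) p"

definition low_boundary_pts :: "(real^'n) set \<Rightarrow> (real^'n) set" where
  "low_boundary_pts D = {y. lattice_pt y \<and> y \<in> frontier (dual_polytope D) \<and>
      (\<forall>F. F facet_of dual_polytope D \<longrightarrow> y \<notin> rel_interior F)}"

end

theory Submission imports Defs "Jordan_Normal_Form.Char_Poly" begin

lemma generic_inv:
  fixes A :: "'a set" and N :: "'a \<Rightarrow> 'a \<Rightarrow> complex"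
  assumes "finite A"
  shows "\<exists>E. finite E \<and> (\<forall>a. a \<notin> E \<longrightarrow> (\<forall>x\<in>A. \<exists>q. \<forall>z\<in>A.
     (\<Sum>y\<in>A. q y * ((if z = y then a else 0) + N y z)) = (if z = x then 1 else 0)))"
proof -
  obtain xs where xs: "set xs = A" "distinct xs" using finite_distinct_list[OF assms] by blast
  define n where "n = length xs"
  define Nm where "Nm = mat n n (\<lambda>(i,j). N (xs!i) (xs!j))"
  have Nc: "Nm \<in> carrier_mat n n" by (simp add: Nm_def)
  define E where "E = uminus ` {e. poly (char_poly Nm) e = 0}"
  have "char_poly Nm \<noteq> 0" using degree_monic_char_poly[OF Nc] by auto
  hence "finite E" using poly_roots_finite unfolding E_def by blast
  moreover have "\<forall>a. a \<notin> E \<longrightarrow> (\<forall>x\<in>A. \<exists>q. \<forall>z\<in>A.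
     (\<Sum>y\<in>A. q y * ((if z = y then a else 0) + N y z)) = (if z = x then 1 else 0))"
  proof (intro allI impI ballI)
    fix a x assume aE: "a \<notin> E" and x: "x \<in> A"
    have "poly (char_poly Nm) (-a) \<noteq> 0"
    proof
      assume "poly (char_poly Nm) (-a) = 0"
      hence "- (-a) \<in> E" unfolding E_def by blast
      thus False using aE by simp
    qed
    hence "\<not> eigenvalue Nm (-a)" by (simp add: eigenvalue_root_char_poly[OF Nc])
    hence d: "det (char_matrix Nm (-a)) \<noteq> 0" using eigenvalue_det[OF Nc] by simp
    define M where "M = char_matrix Nm (-a)"
    have Mc: "M \<in> carrier_mat n n" using Nc by (simp add: M_def)
    have M_ent: "\<And>i j. i<n \<Longrightarrow> j<n \<Longrightarrow> M $$ (i,j) = (if i = j then a else 0) + N (xs!i) (xs!j)"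
      by (simp add: M_def char_matrix_def Nm_def)
    from det_non_zero_imp_unit[OF Mc d[folded M_def], unfolded Units_def, of "()"]
    obtain Q where Q: "Q \<in> carrier_mat n n" "Q * M = 1\<^sub>m n" by (auto simp: ring_mat_def)
    obtain i where i: "i < n" "xs!i = x" using x xs(1) by (auto simp: in_set_conv_nth n_def)
    define q where "q y = Q $$ (i, SOME j. j < n \<and> xs!j = y)" for y
    show "\<exists>q. \<forall>z\<in>A. (\<Sum>y\<in>A. q y * ((if z = y then a else 0) + N y z)) = (if z = x then 1 else 0)"
    proof (intro exI ballI)
      fix z assume z: "z \<in> A"
      obtain l where l: "l < n" "xs!l = z" using z xs(1) by (auto simp: in_set_conv_nth n_def)
      have inj: "inj_on ((!) xs) {..<n}" using xs(2) by (simp add: inj_on_def nth_eq_iff_index_eq n_def)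
      have Aim: "A = (!) xs ` {..<n}" using xs(1) by (auto simp: in_set_conv_nth n_def image_def)
      have "(\<Sum>y\<in>A. q y * ((if z = y then a else 0) + N y z))
           = (\<Sum>j<n. Q $$ (i,j) * M $$ (j,l))"
        unfolding Aim sum.reindex[OF inj] 
        proof (rule sum.cong[OF refl], unfold comp_def)
          fix j assume j: "j \<in> {..<n}"
          have "(SOME j'. j' < n \<and> xs!j' = xs!j) = j"
            using j xs(2) by (intro some_equality) (auto simp: n_def nth_eq_iff_index_eq)
          thus "q (xs!j) * ((if z = xs!j then a else 0) + N (xs!j) z) = Q $$ (i,j) * M $$ (j,l)"
            using j l xs(2) by (auto simp: q_def M_ent n_def nth_eq_iff_index_eq)
        qed
      also have "\<dots> = (Q * M) $$ (i,l)"
        using Q(1) Mc i l by (simp add: scalar_prod_def lessThan_atLeast0)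
      also have "\<dots> = (if z = x then 1 else 0)"
        using Q i l xs(2) by (auto simp: nth_eq_iff_index_eq n_def)
      finally show "(\<Sum>y\<in>A. q y * ((if z = y then a else 0) + N y z)) = (if z = x then 1 else 0)" .
    qed
  qed
  ultimately show ?thesis by blast
qed

no_notation Matrix.scalar_prod (infix "\<bullet>" 70)
no_notation Matrix.vec_index (infixl "$" 100)

lemma pderiv_var_lookup:
  "Poly_Mapping.lookup (pderiv_var v p) \<beta> = of_nat (Poly_Mapping.lookup \<beta> v + 1) * Poly_Mapping.lookup p (\<beta> + Poly_Mapping.single v 1)"
proof -
  have "{\<beta>. of_nat (Poly_Mapping.lookup \<beta> v + 1) * Poly_Mapping.lookup p (\<beta> + Poly_Mapping.single v 1) \<noteq> (0::complex)}
        \<subseteq> (\<lambda>\<gamma>. \<gamma> - Poly_Mapping.single v 1) ` {\<gamma>. Poly_Mapping.lookup p \<gamma> \<noteq> 0}"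
  proof
    fix \<beta> assume "\<beta> \<in> {\<beta>. of_nat (Poly_Mapping.lookup \<beta> v + 1) * Poly_Mapping.lookup p (\<beta> + Poly_Mapping.single v 1) \<noteq> (0::complex)}"
    hence "Poly_Mapping.lookup p (\<beta> + Poly_Mapping.single v 1) \<noteq> 0" by auto
    moreover have "\<beta> = (\<beta> + Poly_Mapping.single v 1) - Poly_Mapping.single v 1" by simp
    ultimately show "\<beta> \<in> (\<lambda>\<gamma>. \<gamma> - Poly_Mapping.single v 1) ` {\<gamma>. Poly_Mapping.lookup p \<gamma> \<noteq> 0}" by blast
  qed
  hence "finite {\<beta>. of_nat (Poly_Mapping.lookup \<beta> v + 1) * Poly_Mapping.lookup p (\<beta> + Poly_Mapping.single v 1) \<noteq> (0::complex)}"
    by (rule finite_subset) simp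
  thus ?thesis unfolding pderiv_var_def by simp
qed

lemma pderiv_var_add: "pderiv_var v (p + q) = pderiv_var v p + pderiv_var v q"
  by (rule poly_mapping_eqI) (simp add: pderiv_var_lookup lookup_add distrib_left)

lemma pderiv_var_zero: "pderiv_var v 0 = 0"
  by (rule poly_mapping_eqI) (simp add: pderiv_var_lookup)

lemma pderiv_var_sum: "pderiv_var v (\<Sum>i\<in>S. p i) = (\<Sum>i\<in>S. pderiv_var v (p i))"
  by (induction S rule: infinite_finite_induct) (auto simp: pderiv_var_add pderiv_var_zero)

lemma pderiv_var_single:
  "pderiv_var v (Poly_Mapping.single \<alpha> c) =
     Poly_Mapping.single (\<alpha> - Poly_Mapping.single v 1) (of_nat (Poly_Mapping.lookup \<alpha> v) * c)"
proof (rule poly_mapping_eqI)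
  fix \<beta>
  show "Poly_Mapping.lookup (pderiv_var v (Poly_Mapping.single \<alpha> c)) \<beta> =
        Poly_Mapping.lookup (Poly_Mapping.single (\<alpha> - Poly_Mapping.single v 1) (of_nat (Poly_Mapping.lookup \<alpha> v) * c)) \<beta>"
  proof (cases "\<alpha> = \<beta> + Poly_Mapping.single v 1")
    case True
    then show ?thesis by (simp add: pderiv_var_lookup lookup_add)
  next
    case False
    show ?thesis
    proof (cases "Poly_Mapping.lookup \<alpha> v = 0")
      case True
      then show ?thesis using False by (simp add: pderiv_var_lookup lookup_single)
    next
      case False2: False
      have "\<alpha> - Poly_Mapping.single v 1 \<noteq> \<beta>"
      proof
        assume h: "\<alpha> - Poly_Mapping.single v 1 = \<beta>"
        have "\<alpha> = \<beta> + Poly_Mapping.single v 1"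
          by (rule poly_mapping_eqI) (use False2 in \<open>auto simp: h[symmetric] lookup_add lookup_minus lookup_single when_def\<close>)
        thus False using False by simp
      qed
      then show ?thesis using False by (simp add: pderiv_var_lookup lookup_single)
    qed
  qed
qed

lemma single_sum: "Poly_Mapping.single k (\<Sum>i\<in>S. f i) = (\<Sum>i\<in>S. Poly_Mapping.single k (f i))"
  by (induction S rule: infinite_finite_induct) (auto simp: single_add)

lemma const_mult_single: "const_poly c * Poly_Mapping.single k d = Poly_Mapping.single k (c * d)"
  by (simp add: const_poly_def mult_single)

lemma in_gen_ideal_sum:
  assumes "finite S" "\<forall>i\<in>S. in_gen_ideal I g (p i)" "finite I"
  shows "in_gen_ideal I g (\<Sum>i\<in>S. p i)"
proof -
  from assms(2) obtain H where H: "\<forall>i\<in>S. p i = (\<Sum>v\<in>I. H i v * g v)"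
    unfolding in_gen_ideal_def by metis
  have "(\<Sum>i\<in>S. p i) = (\<Sum>v\<in>I. (\<Sum>i\<in>S. H i v) * g v)"
    using H by (simp add: sum_distrib_right sum.swap[of _ S I])
  then show ?thesis unfolding in_gen_ideal_def by (intro exI[of _ "\<lambda>v. (\<Sum>i\<in>S. H i v)"]) simp
qed

lemma in_gen_ideal_mult:
  assumes "in_gen_ideal I g p"
  shows "in_gen_ideal I g (q * p)"
proof -
  from assms obtain h where "p = (\<Sum>v\<in>I. h v * g v)" unfolding in_gen_ideal_def by blast
  hence "q * p = (\<Sum>v\<in>I. (q * h v) * g v)" by (simp add: sum_distrib_left mult.assoc)
  then show ?thesis unfolding in_gen_ideal_def by (intro exI[of _ "\<lambda>v. q * h v"]) simp
qed

lemma in_gen_ideal_gen: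
  assumes "u \<in> I" "finite I"
  shows "in_gen_ideal I g (h * g u)"
proof -
  have "(\<Sum>v\<in>I. (if v = u then h else 0) * g v) = h * g u"
  proof -
    have "(\<Sum>v\<in>I. (if v = u then h else 0) * g v) = (\<Sum>v\<in>I. if v = u then h * g v else 0)"
      by (rule sum.cong) auto
    also have "\<dots> = h * g u" using assms by (simp add: sum.delta')
    finally show ?thesis .
  qed
  then show ?thesis unfolding in_gen_ideal_def by (intro exI[of _ "\<lambda>v. if v = u then h else 0"]) simp
qed

lemma lat_inner_int: "lattice_pt x \<Longrightarrow> lattice_pt y \<Longrightarrow> x \<bullet> y \<in> \<int>"
  unfolding lattice_pt_def inner_vec_def by (auto intro!: Ints_sum Ints_mult simp: inner_real_def)

lemma lat_add: "lattice_pt x \<Longrightarrow> lattice_pt y \<Longrightarrow> lattice_pt (x + y)"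
  unfolding lattice_pt_def by (auto intro!: Ints_add)

lemma floor_inner_add:
  assumes "lattice_pt w" "lattice_pt v"
  shows "\<lfloor>(y + w) \<bullet> v\<rfloor> = \<lfloor>y \<bullet> v\<rfloor> + \<lfloor>w \<bullet> v\<rfloor>"
proof -
  obtain m where m: "w \<bullet> v = of_int m" using lat_inner_int[OF assms] by (auto elim: Ints_cases)
  show ?thesis by (simp add: inner_add_left m)
qed

lemma lookup_expo:
  assumes "finite (vertices D)"
  shows "Poly_Mapping.lookup (expo D y) v = (if v \<in> vertices D then nat (\<lfloor>y \<bullet> v\<rfloor> + 1) else 0)"
proof -
  have "finite {v. (if v \<in> vertices D then nat (\<lfloor>y \<bullet> v\<rfloor> + 1) else 0) \<noteq> 0}"
    by (rule finite_subset[OF _ assms]) auto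
  thus ?thesis unfolding expo_def by simp
qed

lemma nat_h1: "(i::int) \<ge> -1 \<Longrightarrow> j \<ge> 0 \<Longrightarrow> nat (i+1) + (nat (j+1) - 1) = nat (i+j+1)"
  by arith

lemma nat_h2: "(i::int) \<ge> -1 \<Longrightarrow> j \<ge> 0 \<Longrightarrow> nat j + nat (i+1) = nat (j+i+1)"
  by arith

lemma relation:
  fixes D :: "(real^'n) set" and y u :: "real^'n"
  defines "V \<equiv> vertices D" and "W \<equiv> vertices (dual_polytope D)"
  assumes fV: "finite V" and fW: "finite W" and latV: "\<forall>v\<in>V. lattice_pt v" and latW: "\<forall>w\<in>W. lattice_pt w"
    and laty: "lattice_pt y" and uV: "u \<in> V" and yu: "y \<bullet> u \<ge> -1" and yv: "\<forall>v\<in>V. v \<noteq> u \<longrightarrow> y \<bullet> v \<ge> 0"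
    and WV: "\<forall>w\<in>W. \<forall>v\<in>V. w \<bullet> v \<ge> -1"
  shows "\<exists>h. h * pderiv_var u (fpoly D a) = Poly_Mapping.single (expo D y) a +
            (\<Sum>w\<in>W. Poly_Mapping.single (expo D (y + w)) (of_int (\<lfloor>w \<bullet> u\<rfloor> + 1)))"
proof -
  define f where "f v = (if v \<in> V then nat (\<lfloor>y \<bullet> v\<rfloor> + (if v = u then 1 else 0)) else 0)" for v
  define ex where "ex = Abs_poly_mapping f"
  have lex: "Poly_Mapping.lookup ex v = f v" for v
  proof -
    have "finite {v. f v \<noteq> 0}" by (rule finite_subset[OF _ fV]) (auto simp: f_def)
    thus ?thesis unfolding ex_def by simp
  qed
  define s where "s = Poly_Mapping.single u (1::nat)"
  have le: "Poly_Mapping.lookup (expo D z) v = (if v \<in> V then nat (\<lfloor>z \<bullet> v\<rfloor> + 1) else 0)" for z v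
    using lookup_expo[of D z v] fV by (simp add: V_def)
  have fp: "fpoly D a = (\<Sum>w\<in>W. Poly_Mapping.single (expo D w) 1) + Poly_Mapping.single (expo D 0) a"
    by (simp add: fpoly_def W_def zmono_def const_mult_single)
  have d: "pderiv_var u (fpoly D a) = (\<Sum>w\<in>W. Poly_Mapping.single (expo D w - s) (of_nat (nat (\<lfloor>w \<bullet> u\<rfloor> + 1))))
       + Poly_Mapping.single (expo D 0 - s) a"
    unfolding fp pderiv_var_add pderiv_var_sum pderiv_var_single using uV by (simp add: le s_def)
  have t1: "Poly_Mapping.single ex 1 * Poly_Mapping.single (expo D w - s) (of_nat (nat (\<lfloor>w \<bullet> u\<rfloor> + 1)))
       = Poly_Mapping.single (expo D (y + w)) (of_int (\<lfloor>w \<bullet> u\<rfloor> + 1) :: complex)" if w: "w \<in> W" for w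
  proof (cases "\<lfloor>w \<bullet> u\<rfloor> + 1 = 0")
    case True
    then show ?thesis by simp
  next
    case False
    have "\<lfloor>w \<bullet> u\<rfloor> \<ge> -1" using WV w uV by (auto simp: le_floor_iff)
    hence wu: "\<lfloor>w \<bullet> u\<rfloor> \<ge> 0" using False by linarith
    have "ex + (expo D w - s) = expo D (y + w)"
    proof (rule poly_mapping_eqI)
      fix v
      show "Poly_Mapping.lookup (ex + (expo D w - s)) v = Poly_Mapping.lookup (expo D (y + w)) v"
      proof (cases "v \<in> V")
        case True
        have fl: "\<lfloor>(y + w) \<bullet> v\<rfloor> = \<lfloor>y \<bullet> v\<rfloor> + \<lfloor>w \<bullet> v\<rfloor>"
          using floor_inner_add latV latW w True by blast
        have a1: "\<lfloor>y \<bullet> v\<rfloor> \<ge> -1" "\<lfloor>w \<bullet> v\<rfloor> \<ge> -1" using yu yv WV w True by (auto simp: le_floor_iff)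
        have a2: "v \<noteq> u \<Longrightarrow> \<lfloor>y \<bullet> v\<rfloor> \<ge> 0" using yv True by (auto simp: le_floor_iff)
        show ?thesis
        proof (cases "v = u")
          case True
          have "Poly_Mapping.lookup (ex + (expo D w - s)) v = nat (\<lfloor>y \<bullet> v\<rfloor> + 1) + (nat (\<lfloor>w \<bullet> v\<rfloor> + 1) - 1)"
            using True \<open>v \<in> V\<close> by (simp add: lookup_add lookup_minus lex f_def le s_def lookup_single)
          also have "\<dots> = nat (\<lfloor>y \<bullet> v\<rfloor> + \<lfloor>w \<bullet> v\<rfloor> + 1)" using nat_h1 a1(1) wu True by blast
          also have "\<dots> = Poly_Mapping.lookup (expo D (y + w)) v" using \<open>v \<in> V\<close> by (simp add: le fl)
          finally show ?thesis .
        next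
          case False
          have "Poly_Mapping.lookup (ex + (expo D w - s)) v = nat (\<lfloor>y \<bullet> v\<rfloor>) + nat (\<lfloor>w \<bullet> v\<rfloor> + 1)"
            using False \<open>v \<in> V\<close> by (simp add: lookup_add lookup_minus lex f_def le s_def lookup_single)
          also have "\<dots> = nat (\<lfloor>y \<bullet> v\<rfloor> + \<lfloor>w \<bullet> v\<rfloor> + 1)" using nat_h2 a1(2) a2 False by blast
          also have "\<dots> = Poly_Mapping.lookup (expo D (y + w)) v" using \<open>v \<in> V\<close> by (simp add: le fl)
          finally show ?thesis .
        qed
      next
        case False
        then show ?thesis using uV by (simp add: lookup_add lookup_minus lex f_def le s_def lookup_single when_def)
      qed
    qed
    then show ?thesis using wu by (simp add: mult_single)
  qed
  have t2: "Poly_Mapping.single ex 1 * Poly_Mapping.single (expo D 0 - s) a = Poly_Mapping.single (expo D y) a"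
  proof -
    have "ex + (expo D 0 - s) = expo D y"
    proof (rule poly_mapping_eqI)
      fix v
      show "Poly_Mapping.lookup (ex + (expo D 0 - s)) v = Poly_Mapping.lookup (expo D y) v"
      proof (cases "v \<in> V")
        case True
        have a1: "\<lfloor>y \<bullet> v\<rfloor> \<ge> -1" using yu yv True by (auto simp: le_floor_iff)
        have a2: "v \<noteq> u \<Longrightarrow> \<lfloor>y \<bullet> v\<rfloor> \<ge> 0" using yv True by (auto simp: le_floor_iff)
        show ?thesis
        proof (cases "v = u")
          case True
          have "Poly_Mapping.lookup (ex + (expo D 0 - s)) v = nat (\<lfloor>y \<bullet> v\<rfloor> + 1)"
            using True \<open>v \<in> V\<close> by (simp add: lookup_add lookup_minus lex f_def le s_def lookup_single)
          also have "\<dots> = Poly_Mapping.lookup (expo D y) v" using \<open>v \<in> V\<close> by (simp add: le)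
          finally show ?thesis .
        next
          case False
          have "Poly_Mapping.lookup (ex + (expo D 0 - s)) v = nat (\<lfloor>y \<bullet> v\<rfloor>) + 1"
            using False \<open>v \<in> V\<close> by (simp add: lookup_add lookup_minus lex f_def le s_def lookup_single)
          also have "\<dots> = nat (\<lfloor>y \<bullet> v\<rfloor> + 1)" using a2 False by (subst nat_add_distrib) auto
          also have "\<dots> = Poly_Mapping.lookup (expo D y) v" using \<open>v \<in> V\<close> by (simp add: le)
          finally show ?thesis .
        qed
      next
        case False
        then show ?thesis using uV by (simp add: lookup_add lookup_minus lex f_def le s_def lookup_single when_def)
      qed
    qed
    then show ?thesis by (simp add: mult_single)
  qed
  have "Poly_Mapping.single ex 1 * pderiv_var u (fpoly D a) = Poly_Mapping.single (expo D y) a +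
            (\<Sum>w\<in>W. Poly_Mapping.single (expo D (y + w)) (of_int (\<lfloor>w \<bullet> u\<rfloor> + 1)))"
    unfolding d distrib_left sum_distrib_left t2 using t1 by (simp add: add.commute)
  thus ?thesis by blast
qed


lemma lattice_bounded_finite:
  fixes S :: "(real^'n) set"
  assumes "bounded S"
  shows "finite {x. lattice_pt x \<and> x \<in> S}"
proof -
  obtain r where r: "\<forall>x\<in>S. norm x \<le> r" using assms bounded_iff by blast
  define g where "g x = (\<lambda>i. \<lfloor>x $ i\<rfloor>)" for x :: "real^'n"
  have inj: "inj_on g {x. lattice_pt x \<and> x \<in> S}"
  proof (rule inj_onI)
    fix x y assume x: "x \<in> {x. lattice_pt x \<and> x \<in> S}" and y: "y \<in> {x. lattice_pt x \<and> x \<in> S}" and g: "g x = g y"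
    show "x = y" unfolding Finite_Cartesian_Product.vec_eq_iff
    proof
      fix i
      have "x $ i \<in> \<int>" "y $ i \<in> \<int>" using x y by (auto simp: lattice_pt_def)
      moreover have "\<lfloor>x $ i\<rfloor> = \<lfloor>y $ i\<rfloor>" using g by (metis g_def)
      ultimately show "x $ i = y $ i" by (metis floor_of_int Ints_cases)
    qed
  qed
  have "g ` {x. lattice_pt x \<and> x \<in> S} \<subseteq> PiE UNIV (\<lambda>_. {-\<lceil>r\<rceil>..\<lceil>r\<rceil>})"
  proof
    fix f assume "f \<in> g ` {x. lattice_pt x \<and> x \<in> S}"
    then obtain x where x: "x \<in> S" and f: "f = g x" by auto
    have "\<bar>x $ i\<bar> \<le> r" for i using r x component_le_norm_cart[of x i] by force
    have "\<lfloor>x $ i\<rfloor> \<in> {-\<lceil>r\<rceil>..\<lceil>r\<rceil>}" for i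
    proof -
      have a: "x $ i \<le> r" "-r \<le> x $ i" using \<open>\<bar>x $ i\<bar> \<le> r\<close> by auto
      have "\<lfloor>x $ i\<rfloor> \<le> \<lfloor>r\<rfloor>" using a(1) by (rule floor_mono)
      moreover have "\<lfloor>r\<rfloor> \<le> \<lceil>r\<rceil>" by (rule floor_le_ceiling)
      moreover have "\<lfloor>-r\<rfloor> \<le> \<lfloor>x $ i\<rfloor>" using a(2) by (rule floor_mono)
      moreover have "\<lfloor>-r\<rfloor> = -\<lceil>r\<rceil>" by (simp add: ceiling_def)
      ultimately have "\<lfloor>x $ i\<rfloor> \<le> \<lceil>r\<rceil> \<and> -\<lceil>r\<rceil> \<le> \<lfloor>x $ i\<rfloor>" by linarith
      thus ?thesis by simp
    qed
    thus "f \<in> PiE UNIV (\<lambda>_. {-\<lceil>r\<rceil>..\<lceil>r\<rceil>})" by (simp add: f g_def PiE_UNIV_domain)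
  qed
  hence "finite (g ` {x. lattice_pt x \<and> x \<in> S})" by (rule finite_subset) (intro finite_PiE; simp)
  thus ?thesis using finite_image_iff[OF inj] by blast
qed

lemma hyp_eq:
  fixes w1 w2 :: "'a::real_inner"
  assumes w1: "w1 \<noteq> 0" and H: "{x. w1 \<bullet> x = -1} = {x. w2 \<bullet> x = -1}"
  shows "w1 = w2"
proof -
  define c where "c = w1 \<bullet> w1"
  have c: "c > 0" using w1 by (simp add: c_def)
  define p where "p = (- 1 / c) *\<^sub>R w1"
  have p1: "w1 \<bullet> p = -1" using c by (simp add: p_def c_def)
  hence p2: "w2 \<bullet> p = -1" using H by blast
  have orth: "w2 \<bullet> t = 0" if "w1 \<bullet> t = 0" for t
  proof -
    have "w1 \<bullet> (p + t) = -1" using p1 that by (simp add: inner_add_right)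
    hence "w2 \<bullet> (p + t) = -1" using H by blast
    thus ?thesis using p2 by (simp add: inner_add_right)
  qed
  define l where "l = (w2 \<bullet> w1) / c"
  define t where "t = w2 - l *\<^sub>R w1"
  have "w1 \<bullet> t = 0" using c by (simp add: t_def l_def inner_diff_right c_def inner_commute)
  hence "w2 \<bullet> t = 0" by (rule orth)
  hence "t \<bullet> t = 0" using \<open>w1 \<bullet> t = 0\<close> by (simp add: t_def inner_diff_left inner_commute)
  hence "t = 0" by simp
  hence w2l: "w2 = l *\<^sub>R w1" by (simp add: t_def)
  have "l * (w1 \<bullet> p) = -1" using p2 by (simp add: w2l)
  hence "l = 1" using p1 by simp
  thus ?thesis using w2l by simp
qed

lemma two_tight_low:
  fixes D :: "(real^'n) set"
  assumes cvx: "convex (dual_polytope D)" and int: "interior (dual_polytope D) \<noteq> {}"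
    and w1D: "w1 \<in> D" and w2D: "w2 \<in> D" and ne: "w1 \<noteq> w2"
    and yDs: "y \<in> dual_polytope D" and t1: "y \<bullet> w1 = -1" and t2: "y \<bullet> w2 = -1" and lat: "lattice_pt y"
  shows "y \<in> low_boundary_pts D"
proof -
  define Ds where "Ds = dual_polytope D"
  have ge: "\<And>x w. x \<in> Ds \<Longrightarrow> w \<in> D \<Longrightarrow> x \<bullet> w \<ge> -1" by (auto simp: Ds_def dual_polytope_def)
  have w10: "w1 \<noteq> 0" using t1 by auto
  have w20: "w2 \<noteq> 0" using t2 by auto
  have fr: "y \<in> frontier Ds"
  proof -
    have "y \<notin> interior Ds"
    proof
      assume "y \<in> interior Ds"
      then obtain e where e: "e > 0" "ball y e \<subseteq> Ds" using mem_interior by blast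
      define z where "z = y - (e / (2 * norm w1)) *\<^sub>R w1"
      have "dist y z = e / 2" using w10 e by (simp add: z_def dist_norm)
      hence "z \<in> Ds" using e by auto
      hence "z \<bullet> w1 \<ge> -1" using ge w1D by blast
      moreover have "z \<bullet> w1 = -1 - e * norm w1 / 2"
        using w10 t1 by (simp add: z_def inner_diff_left dot_square_norm power2_eq_square)
      moreover have "e * norm w1 / 2 > 0" using e w10 by simp
      ultimately show False by linarith
    qed
    moreover have "y \<in> closure Ds" using yDs closure_subset by (auto simp: Ds_def)
    ultimately show ?thesis by (simp add: frontier_def)
  qed
  have nofacet: "y \<notin> rel_interior F" if F: "F facet_of Ds" for F
  proof
    assume yF: "y \<in> rel_interior F"
    have FDs: "F \<subseteq> Ds" using F facet_of_imp_subset by blast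
    have sub: "F \<subseteq> {x. w \<bullet> x = -1}" if wD: "w \<in> D" and tw: "y \<bullet> w = -1" for w
    proof -
      have "Ds \<inter> {x. (-w) \<bullet> x = 1} face_of Ds"
        using cvx ge[OF _ wD] by (intro face_of_Int_supporting_hyperplane_le) (auto simp: Ds_def inner_commute)
      moreover have "y \<in> Ds \<inter> {x. (-w) \<bullet> x = 1}"
        using yF rel_interior_subset FDs tw by (auto simp: inner_commute)
      ultimately have "F \<subseteq> Ds \<inter> {x. (-w) \<bullet> x = 1}"
        using subset_of_face_of[OF _ FDs] yF by blast
      thus ?thesis by auto
    qed
    have "aff_dim Ds = int DIM(real^'n)" using aff_dim_nonempty_interior[OF int] by (simp add: Ds_def)
    hence adF: "aff_dim F = int DIM(real^'n) - 1"
      using F by (auto simp: facet_of_def)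
    have hull: "affine hull F = {x. w \<bullet> x = -1}" if wD: "w \<in> D" and tw: "y \<bullet> w = -1" for w
    proof -
      have w0: "w \<noteq> 0" using tw by auto
      have "aff_dim F = aff_dim {x. w \<bullet> x = -1}"
        using adF aff_dim_hyperplane[OF w0, of "-1"] DIM_positive[where 'a="real^'n"] by linarith
      hence "affine hull F = affine hull {x. w \<bullet> x = -1}" using aff_dim_eq_full_gen[OF sub[OF wD tw]] by blast
      thus ?thesis by (simp add: affine_hyperplane)
    qed
    have "{x. w1 \<bullet> x = -1} = {x. w2 \<bullet> x = -1}" using hull[OF w1D t1] hull[OF w2D t2] by simp
    hence "w1 = w2" using hyp_eq w10 by blast
    thus False using ne by simp
  qed
  show ?thesis using lat fr nofacet by (auto simp: low_boundary_pts_def Ds_def)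
qed



theorem lemma3p1:
  fixes D :: "(real^'n) set"
  assumes "reflexive_polytope D"
  shows "\<exists>E :: complex set. finite E \<and>
    (\<forall>a. a \<notin> E \<longrightarrow>
      (\<forall>x. lattice_pt x \<and> (\<exists>F. F facet_of dual_polytope D \<and> x \<in> rel_interior F) \<longrightarrow>
        (\<exists>c :: real^'n \<Rightarrow> complex.
           jacobian_ideal_mem D a
             (zmono D x - (\<Sum>y\<in>low_boundary_pts D. const_poly (c y) * zmono D y)))))"
proof -
  define V where "V = vertices D"
  define Ds where "Ds = dual_polytope D"
  define W where "W = vertices Ds"
  obtain S where S: "finite S" "\<forall>x\<in>S. lattice_pt x" "D = convex hull S"
    using assms unfolding reflexive_polytope_def lattice_polytope_def by blast
  obtain S' where S': "finite S'" "\<forall>x\<in>S'. lattice_pt x" "Ds = convex hull S'"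
    using assms unfolding reflexive_polytope_def lattice_polytope_def Ds_def by blast
  have D0: "0 \<in> interior D" using assms reflexive_polytope_def by blast
  have VS: "V \<subseteq> S" using S(3) extreme_point_of_convex_hull by (auto simp: V_def vertices_def)
  have fV: "finite V" using VS S(1) finite_subset by blast
  have latV: "\<forall>v\<in>V. lattice_pt v" using VS S(2) by blast
  have DV: "D = convex hull V" using Krein_Milman_polytope[OF S(1)] S(3) by (simp add: V_def vertices_def)
  have VD: "V \<subseteq> D" by (auto simp: V_def vertices_def extreme_point_of_def)
  have Vne: "V \<noteq> {}" using D0 interior_subset DV by fastforce
  have dual_iff: "z \<in> Ds \<longleftrightarrow> (\<forall>v\<in>V. z \<bullet> v \<ge> -1)" for z
  proof
    assume "z \<in> Ds" thus "\<forall>v\<in>V. z \<bullet> v \<ge> -1" using VD by (auto simp: Ds_def dual_polytope_def)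
  next
    assume h: "\<forall>v\<in>V. z \<bullet> v \<ge> -1"
    have "convex hull V \<subseteq> {x. -1 \<le> z \<bullet> x}" by (rule hull_minimal) (use h convex_halfspace_ge in auto)
    thus "z \<in> Ds" using DV by (auto simp: Ds_def dual_polytope_def)
  qed
  have WS: "W \<subseteq> S'" using S'(3) extreme_point_of_convex_hull by (auto simp: W_def vertices_def)
  have fW: "finite W" using WS S'(1) finite_subset by blast
  have latW: "\<forall>w\<in>W. lattice_pt w" using WS S'(2) by blast
  have WDs: "W \<subseteq> Ds" by (auto simp: W_def vertices_def extreme_point_of_def)
  have WV: "\<forall>w\<in>W. \<forall>v\<in>V. w \<bullet> v \<ge> -1" using WDs dual_iff by blast
  have cDs: "compact Ds" using S' by (simp add: compact_convex_hull finite_imp_compact)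
  have cvx: "convex Ds" using S'(3) by simp
  have intDs: "interior Ds \<noteq> {}"
  proof -
    have "bounded D" using S by (simp add: compact_imp_bounded compact_convex_hull finite_imp_compact)
    then obtain R where R: "R > 0" "\<forall>x\<in>D. norm x \<le> R" using bounded_pos by blast
    have "ball 0 (1/R) \<subseteq> Ds"
    proof
      fix z :: "real^'n" assume "z \<in> ball 0 (1/R)"
      hence nz: "norm z < 1/R" by simp
      have "z \<bullet> x \<ge> -1" if "x \<in> D" for x
      proof -
        have "\<bar>z \<bullet> x\<bar> \<le> norm z * norm x" by (rule Cauchy_Schwarz_ineq2)
        also have "\<dots> \<le> (1/R) * R" using nz R that by (intro mult_mono) auto
        also have "\<dots> = 1" using R by simp
        finally show ?thesis by linarith
      qed
      thus "z \<in> Ds" by (auto simp: Ds_def dual_polytope_def)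
    qed
    hence "0 \<in> interior Ds" unfolding mem_interior using R by (intro exI[of _ "1/R"]) auto
    thus ?thesis by blast
  qed
  define P where "P = {z. lattice_pt z \<and> z \<in> Ds}"
  have fP: "finite P" unfolding P_def using lattice_bounded_finite compact_imp_bounded[OF cDs] by blast
  define LB where "LB = low_boundary_pts D"
  have LBP: "LB \<subseteq> P"
    using frontier_subset_closed[OF compact_imp_closed[OF cDs]] by (auto simp: LB_def low_boundary_pts_def P_def Ds_def)
  have fLB: "finite LB" using LBP fP finite_subset by blast
  define B where "B = {y\<in>P. \<exists>w1\<in>V. \<exists>w2\<in>V. w1 \<noteq> w2 \<and> y \<bullet> w1 = -1 \<and> y \<bullet> w2 = -1}"
  have BLB: "B \<subseteq> LB"
  proof
    fix y assume "y \<in> B"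
    then obtain w1 w2 where w: "y \<in> P" "w1 \<in> V" "w2 \<in> V" "w1 \<noteq> w2" "y \<bullet> w1 = -1" "y \<bullet> w2 = -1"
      by (auto simp: B_def)
    show "y \<in> LB" using two_tight_low[of D w1 w2 y] cvx intDs VD w by (auto simp: LB_def Ds_def P_def)
  qed
  define A where "A = P - B"
  have fA: "finite A" using fP by (simp add: A_def)
  have BP: "B \<subseteq> P" by (auto simp: B_def)
  have exU: "\<forall>y\<in>A. \<exists>u\<in>V. \<forall>w\<in>V. w \<noteq> u \<longrightarrow> y \<bullet> w \<ge> 0"
  proof
    fix y assume yA: "y \<in> A"
    hence yP: "y \<in> P" and yB: "y \<notin> B" by (auto simp: A_def)
    have ge: "y \<bullet> w \<ge> -1" if "w \<in> V" for w using yP that dual_iff by (auto simp: P_def)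
    have ge0: "y \<bullet> w \<ge> 0" if wV: "w \<in> V" and wn: "y \<bullet> w \<noteq> -1" for w
    proof -
      have "y \<bullet> w \<in> \<int>" using lat_inner_int[of y w] yP latV wV by (auto simp: P_def)
      then obtain m where m: "y \<bullet> w = of_int m" by (auto elim: Ints_cases)
      have "m \<ge> -1" using ge[OF wV] m by simp
      moreover have "m \<noteq> -1" using wn m by simp
      ultimately have "m \<ge> 0" by linarith
      thus ?thesis using m by simp
    qed
    show "\<exists>u\<in>V. \<forall>w\<in>V. w \<noteq> u \<longrightarrow> y \<bullet> w \<ge> 0"
    proof (cases "\<exists>u\<in>V. y \<bullet> u = -1")
      case True
      then obtain u where u: "u \<in> V" "y \<bullet> u = -1" by blast
      have "\<forall>w\<in>V. w \<noteq> u \<longrightarrow> y \<bullet> w \<ge> 0"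
      proof (intro ballI impI)
        fix w assume w: "w \<in> V" "w \<noteq> u"
        have "y \<bullet> w \<noteq> -1" using yB yP u w by (auto simp: B_def)
        thus "y \<bullet> w \<ge> 0" using ge0 w by blast
      qed
      thus ?thesis using u by blast
    next
      case False
      then obtain u where "u \<in> V" using Vne by blast
      thus ?thesis using False ge0 by blast
    qed
  qed
  then obtain U where U: "\<forall>y\<in>A. U y \<in> V \<and> (\<forall>w\<in>V. w \<noteq> U y \<longrightarrow> y \<bullet> w \<ge> 0)" by metis
  define k where "k y w = (of_int (\<lfloor>w \<bullet> U y\<rfloor> + 1) :: complex)" for y w
  define N where "N y z = (\<Sum>w\<in>W. if z = y + w then k y w else 0)" for y z
  obtain E where E: "finite E" "\<forall>a. a \<notin> E \<longrightarrow> (\<forall>x\<in>A. \<exists>q. \<forall>z\<in>A. (\<Sum>y\<in>A. q y * ((if z = y then a else 0) + N y z)) = (if z = x then 1 else 0))"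
    using generic_inv[OF fA, of N] by blast
  show ?thesis
  proof (intro exI[of _ E] conjI allI impI)
    show "finite E" by fact
    fix a x
    assume aE: "a \<notin> E" and xh: "lattice_pt x \<and> (\<exists>F. F facet_of dual_polytope D \<and> x \<in> rel_interior F)"
    then obtain F where F: "F facet_of Ds" "x \<in> rel_interior F" by (auto simp: Ds_def)
    have "x \<in> F" using F(2) rel_interior_subset by blast
    hence "x \<in> Ds" using F(1) facet_of_imp_subset by blast
    hence xP: "x \<in> P" using xh by (auto simp: P_def)
    have xLB: "x \<notin> LB" using F by (auto simp: LB_def low_boundary_pts_def Ds_def)
    have xA: "x \<in> A" using xP xLB BLB by (auto simp: A_def)
    obtain q where q: "\<forall>z\<in>A. (\<Sum>y\<in>A. q y * ((if z = y then a else 0) + N y z)) = (if z = x then 1 else 0)"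
      using E(2) aE xA by blast
    define Mf where "Mf y z = (if z = y then a else 0) + N y z" for y z
    define J where "J p = jacobian_ideal_mem D a p" for p
    define mono where "mono z c = Poly_Mapping.single (expo D z) (c::complex)" for z c
    have rel: "J (\<Sum>z\<in>P. mono z (Mf y z))" if yA: "y \<in> A" for y
    proof -
      have yP: "y \<in> P" using yA by (simp add: A_def)
      have yU: "y \<bullet> U y \<ge> -1" using yP U yA dual_iff by (auto simp: P_def)
      obtain h where h: "h * pderiv_var (U y) (fpoly D a) = Poly_Mapping.single (expo D y) a
            + (\<Sum>w\<in>W. Poly_Mapping.single (expo D (y + w)) (of_int (\<lfloor>w \<bullet> U y\<rfloor> + 1)))"
        using relation[of D y "U y" a] fV fW latV latW yP U yA yU WV by (auto simp: V_def W_def Ds_def P_def)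
      have J1: "J (h * pderiv_var (U y) (fpoly D a))" unfolding J_def jacobian_ideal_mem_def
        using in_gen_ideal_gen[of "U y" "vertices D"] U yA fV by (auto simp: V_def)
      have kP: "y + w \<in> P" if w: "w \<in> W" "k y w \<noteq> 0" for w
      proof -
        have "\<lfloor>w \<bullet> U y\<rfloor> + 1 \<noteq> 0"
        proof
          assume h0: "\<lfloor>w \<bullet> U y\<rfloor> + 1 = 0"
          have "k y w = of_int (\<lfloor>w \<bullet> U y\<rfloor> + 1)" by (simp only: k_def)
          also have "\<dots> = 0" by (simp only: h0 of_int_0)
          finally show False using w(2) by simp
        qed
        moreover have "\<lfloor>w \<bullet> U y\<rfloor> \<ge> -1" using WV w(1) U yA by (auto simp: le_floor_iff)
        ultimately have "\<lfloor>w \<bullet> U y\<rfloor> \<ge> 0" by linarith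
        hence wu: "w \<bullet> U y \<ge> 0" by simp
        have "\<forall>v\<in>V. (y + w) \<bullet> v \<ge> -1"
        proof
          fix v assume v: "v \<in> V"
          show "(y + w) \<bullet> v \<ge> -1"
          proof (cases "v = U y")
            case True
            have "y \<bullet> v \<ge> -1" using yP dual_iff v by (auto simp: P_def)
            thus ?thesis using wu True by (simp add: inner_add_left)
          next
            case False
            have "y \<bullet> v \<ge> 0" using U yA v False by blast
            moreover have "w \<bullet> v \<ge> -1" using WV w(1) v by blast
            ultimately show ?thesis by (simp add: inner_add_left)
          qed
        qed
        moreover have "lattice_pt (y + w)" using lat_add yP latW w(1) by (auto simp: P_def)
        ultimately show ?thesis using dual_iff by (auto simp: P_def)
      qed
      have s1: "(\<Sum>z\<in>P. mono z (if z = y then a else 0)) = Poly_Mapping.single (expo D y) a"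
      proof -
        have "(\<Sum>z\<in>P. mono z (if z = y then a else 0)) = (\<Sum>z\<in>P. if z = y then mono z a else 0)"
          by (rule sum.cong) (auto simp: mono_def)
        also have "\<dots> = mono y a" using fP yP by (simp add: sum.delta)
        finally show ?thesis by (simp add: mono_def)
      qed
      have s2: "(\<Sum>z\<in>P. mono z (N y z)) = (\<Sum>w\<in>W. Poly_Mapping.single (expo D (y + w)) (k y w))"
      proof -
        have "(\<Sum>z\<in>P. mono z (N y z)) = (\<Sum>z\<in>P. \<Sum>w\<in>W. if z = y + w then mono (y + w) (k y w) else 0)"
        proof (rule sum.cong[OF refl])
          fix z
          show "mono z (N y z) = (\<Sum>w\<in>W. if z = y + w then mono (y + w) (k y w) else 0)"
            unfolding mono_def N_def single_sum by (rule sum.cong[OF refl]) auto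
        qed
        also have "\<dots> = (\<Sum>w\<in>W. \<Sum>z\<in>P. if z = y + w then mono (y + w) (k y w) else 0)" by (rule sum.swap)
        also have "\<dots> = (\<Sum>w\<in>W. if y + w \<in> P then mono (y + w) (k y w) else 0)" using fP by (simp add: sum.delta)
        also have "\<dots> = (\<Sum>w\<in>W. mono (y + w) (k y w))" by (rule sum.cong[OF refl]) (use kP in \<open>fastforce simp: mono_def\<close>)
        finally show ?thesis by (simp add: mono_def)
      qed
      have eq: "(\<Sum>z\<in>P. mono z (Mf y z)) = h * pderiv_var (U y) (fpoly D a)"
      proof -
        have "(\<Sum>z\<in>P. mono z (Mf y z)) = (\<Sum>z\<in>P. mono z (if z = y then a else 0)) + (\<Sum>z\<in>P. mono z (N y z))"
          unfolding Mf_def mono_def single_add sum.distrib ..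
        also have "\<dots> = h * pderiv_var (U y) (fpoly D a)" unfolding s1 s2 h by (simp add: k_def)
        finally show ?thesis .
      qed
      show ?thesis using J1 eq by simp
    qed
    have Jsum: "J (\<Sum>y\<in>A. const_poly (q y) * (\<Sum>z\<in>P. mono z (Mf y z)))"
      unfolding J_def jacobian_ideal_mem_def
    proof (rule in_gen_ideal_sum[OF fA])
      show "\<forall>i\<in>A. in_gen_ideal (vertices D) (\<lambda>v. pderiv_var v (fpoly D a)) (const_poly (q i) * (\<Sum>z\<in>P. mono z (Mf i z)))"
        using rel by (auto simp: J_def jacobian_ideal_mem_def intro: in_gen_ideal_mult)
      show "finite (vertices D)" using fV by (simp add: V_def)
    qed
    define c where "c z = (if z \<in> B then - (\<Sum>y\<in>A. q y * Mf y z) else 0)" for z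
    have "(\<Sum>y\<in>A. const_poly (q y) * (\<Sum>z\<in>P. mono z (Mf y z))) = (\<Sum>y\<in>A. \<Sum>z\<in>P. mono z (q y * Mf y z))"
      by (simp add: sum_distrib_left mono_def const_mult_single)
    also have "\<dots> = (\<Sum>z\<in>P. \<Sum>y\<in>A. mono z (q y * Mf y z))" by (rule sum.swap)
    also have "\<dots> = (\<Sum>z\<in>P. mono z (\<Sum>y\<in>A. q y * Mf y z))" by (simp add: mono_def single_sum)
    also have "\<dots> = (\<Sum>z\<in>A. mono z (\<Sum>y\<in>A. q y * Mf y z)) + (\<Sum>z\<in>B. mono z (\<Sum>y\<in>A. q y * Mf y z))"
    proof -
      have "P = A \<union> B" using BP by (auto simp: A_def)
      moreover have "A \<inter> B = {}" by (auto simp: A_def)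
      moreover have "finite B" using BP fP finite_subset by blast
      ultimately show ?thesis using fA by (simp add: sum.union_disjoint)
    qed
    also have "(\<Sum>z\<in>A. mono z (\<Sum>y\<in>A. q y * Mf y z)) = zmono D x"
    proof -
      have "(\<Sum>z\<in>A. mono z (\<Sum>y\<in>A. q y * Mf y z)) = (\<Sum>z\<in>A. if z = x then mono z 1 else 0)"
        by (rule sum.cong[OF refl]) (use q in \<open>auto simp: Mf_def mono_def\<close>)
      also have "\<dots> = mono x 1" using fA xA by (simp add: sum.delta)
      finally show ?thesis by (simp add: mono_def zmono_def)
    qed
    also have "(\<Sum>z\<in>B. mono z (\<Sum>y\<in>A. q y * Mf y z)) = - (\<Sum>z\<in>LB. const_poly (c z) * zmono D z)"
    proof -
      have "(\<Sum>z\<in>LB. const_poly (c z) * zmono D z) = (\<Sum>z\<in>LB. mono z (c z))"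
        by (simp add: zmono_def const_mult_single mono_def)
      also have "\<dots> = (\<Sum>z\<in>B. mono z (c z))"
        by (rule sum.mono_neutral_right[OF fLB BLB]) (auto simp: c_def mono_def)
      also have "\<dots> = (\<Sum>z\<in>B. - mono z (\<Sum>y\<in>A. q y * Mf y z))"
        by (rule sum.cong[OF refl]) (simp add: c_def mono_def single_uminus)
      finally show ?thesis by (simp add: sum_negf)
    qed
    finally have "J (zmono D x - (\<Sum>z\<in>LB. const_poly (c z) * zmono D z))" using Jsum by simp
    thus "\<exists>c. jacobian_ideal_mem D a (zmono D x - (\<Sum>y\<in>low_boundary_pts D. const_poly (c y) * zmono D y))"
      by (auto simp: J_def LB_def)
  qed
qed

end
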